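(* For every $i\ge1$, $$P_i=\sum_{a_1+2a_2+\cdots+ia_i=i}(-1)^{a_1+\cdots+a_i+1}\frac{(a_1+\cdots+a_i-1)!}{a_1!\cdots a_i!}\,l_1^{a_1}\cdots l_i^{a_i},$$ the sum being over tuples $(a_1,\dots,a_i)$ of nonnegative integers.
   Context: ${\cal H}_R$ is the commutative polynomial algebra over $\mathbb{Q}$ on isomorphism classes of rooted trees (finite connected simply connected graphs with a root, edges oriented away from the root). A ladder is a rooted tree in which every vertex has at most one outgoing edge; $l_i$ denotes the unique ladder with $i$ vertices. For $n\ge1$ let $\Psi_n(X_1,\dots,X_n)=\sum_{a_1+2a_2+\cdots+na_n=n}\frac{X_1^{a_1}\cdots X_n^{a_n}}{a_1!\cdots a_n!}$. Define $P_1=l_1$ and, for $n\ge2$, $P_n=l_n-\Psi_n(P_1,\dots,P_{n-1},0)$ (computed in ${\cal H}_R$). *)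

theory Defs
  imports Complex_Main "HOL-Library.Multiset" "HOL-Library.Poly_Mapping"
begin

text \<open>Isomorphism classes of rooted trees: a rooted tree is a root together with
  the multiset of (isomorphism classes of) subtrees hanging at its children.\<close>
datatype rtree = Node "rtree multiset"

text \<open>The Connes--Kreimer algebra H_R: the commutative polynomial algebra over Q
  on the set of rooted trees; monomials are finitely supported exponent maps.\<close>
type_synonym HR = "(rtree \<Rightarrow>\<^sub>0 nat) \<Rightarrow>\<^sub>0 rat"

definition tree_var :: "rtree \<Rightarrow> HR" where
  "tree_var t = Poly_Mapping.single (Poly_Mapping.single t 1) 1"

definition const :: "rat \<Rightarrow> HR" where
  "const c = Poly_Mapping.single 0 c"

fun ladder_tree :: "nat \<Rightarrow> rtree" where
  "ladder_tree 0 = Node {#}"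
| "ladder_tree (Suc 0) = Node {#}"
| "ladder_tree (Suc (Suc n)) = Node {# ladder_tree (Suc n) #}"

definition ladder :: "nat \<Rightarrow> HR" where
  "ladder i = tree_var (ladder_tree i)"

definition tuples :: "nat \<Rightarrow> (nat \<Rightarrow> nat) set" where
  "tuples n = {a. (\<forall>k. k \<notin> {1..n} \<longrightarrow> a k = 0) \<and> (\<Sum>k=1..n. k * a k) = n}"

definition Psi :: "nat \<Rightarrow> (nat \<Rightarrow> HR) \<Rightarrow> HR" where
  "Psi n X = (\<Sum>a\<in>tuples n.
      const (1 / of_nat (\<Prod>k=1..n. fact (a k))) * (\<Prod>k=1..n. X k ^ a k))"

text \<open>Pfun m k = P_k for 1 \<le> k \<le> m, and 0 otherwise.\<close>
fun Pfun :: "nat \<Rightarrow> nat \<Rightarrow> HR" where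
  "Pfun 0 = (\<lambda>_. 0)"
| "Pfun (Suc m) = (Pfun m)(Suc m :=
      (if m = 0 then ladder 1 else ladder (Suc m) - Psi (Suc m) (Pfun m)))"

definition P :: "nat \<Rightarrow> HR" where
  "P n = Pfun n n"

end

theory Submission imports Defs "HOL-Computational_Algebra.Formal_Power_Series" begin

lemma const_mult: "const (a * b) = const a * const b"
  by (simp add: const_def mult_single)
lemma const_add: "const (a + b) = const a + const b"
  by (simp add: const_def single_add)
lemma const_one[simp]: "const 1 = 1"
  by (simp add: const_def)
lemma const_of_nat[simp]: "const (of_nat n) = of_nat n"
  by (simp add: const_def)
lemma const_zero[simp]: "const 0 = 0"
  by (simp add: const_def)

lemma cancel_nat:
  fixes x y :: HR
  assumes "of_nat n * x = of_nat n * y" "n \<noteq> 0"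
  shows "x = y"
proof -
  have one: "const (1 / of_nat n) * of_nat n = (1::HR)"
  proof -
    have "const (1 / of_nat n) * (of_nat n::HR) = const (1 / of_nat n) * const (of_nat n)" by simp
    also have "\<dots> = const (1 / of_nat n * of_nat n)" by (simp only: const_mult)
    also have "1 / of_nat n * of_nat n = (1::rat)" using assms(2) by simp
    finally show ?thesis by simp
  qed
  have "x = (const (1 / of_nat n) * of_nat n) * x" using one by simp
  also have "\<dots> = const (1 / of_nat n) * (of_nat n * x)" by (simp only: mult.assoc)
  also have "\<dots> = const (1 / of_nat n) * (of_nat n * y)" using assms(1) by simp
  also have "\<dots> = (const (1 / of_nat n) * of_nat n) * y" by (simp only: mult.assoc)
  finally show ?thesis using one by simp
qed

definition wsum :: "nat \<Rightarrow> (nat \<Rightarrow> nat) \<Rightarrow> nat" where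
  "wsum n a = (\<Sum>k=1..n. a k)"

definition good :: "nat \<Rightarrow> nat \<Rightarrow> (nat \<Rightarrow> nat) \<Rightarrow> bool" where
  "good N m a \<longleftrightarrow> (\<forall>j. j \<notin> {1..N} \<longrightarrow> a j = 0) \<and> (\<Sum>j=1..N. j * a j) = m"

lemma tuples_good: "a \<in> tuples n \<longleftrightarrow> good n n a"
  by (simp add: tuples_def good_def)

lemma good_le: assumes "good N m a" "a j \<noteq> 0" shows "j \<le> m" "j \<in> {1..N}"
proof -
  show j: "j \<in> {1..N}" using assms by (auto simp: good_def)
  have "j \<le> j * a j" using assms(2) by auto
  also have "\<dots> \<le> (\<Sum>j=1..N. j * a j)"
    by (rule member_le_sum) (use j in auto)
  finally show "j \<le> m" using assms by (simp add: good_def)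
qed

lemma good_shrink: assumes "good N m a" "m \<le> N" shows "a \<in> tuples m"
proof -
  have z: "a j = 0" if "j \<notin> {1..m}" for j
  proof (rule ccontr)
    assume "a j \<noteq> 0"
    then have "j \<le> m" "j \<in> {1..N}" using good_le[OF assms(1)] by auto
    then show False using that by auto
  qed
  have "(\<Sum>j=1..m. j * a j) = (\<Sum>j=1..N. j * a j)"
    by (rule sum.mono_neutral_left) (use assms(2) z in auto)
  then show ?thesis using assms z by (simp add: tuples_def good_def)
qed

lemma good_ext: assumes "a \<in> tuples m" "m \<le> N" shows "good N m a"
proof -
  have z: "a j = 0" if "j \<notin> {1..m}" for j using assms that by (simp add: tuples_def)
  have "(\<Sum>j=1..m. j * a j) = (\<Sum>j=1..N. j * a j)"
    by (rule sum.mono_neutral_left) (use assms(2) z in auto)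
  then show ?thesis using assms z by (auto simp add: tuples_def good_def)
qed

lemma sum_upd:
  fixes f :: "nat \<Rightarrow> nat \<Rightarrow> 'b::comm_monoid_add"
  assumes "k \<in> S" "finite S"
  shows "(\<Sum>j\<in>S. f j ((a(k:=v)) j)) = f k v + (\<Sum>j\<in>S-{k}. f j (a j))"
  using assms by (simp add: sum.remove)

lemma prod_upd:
  fixes f :: "nat \<Rightarrow> nat \<Rightarrow> 'b::comm_monoid_mult"
  assumes "k \<in> S" "finite S"
  shows "(\<Prod>j\<in>S. f j ((a(k:=v)) j)) = f k v * (\<Prod>j\<in>S-{k}. f j (a j))"
  using assms by (simp add: prod.remove)

lemma good_upd:
  assumes "good N m a" "k \<in> {1..N}"
  shows "good N (m - k * a k + k * v) (a(k:=v))"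
proof -
  have "(\<Sum>j=1..N. j * (a(k:=v)) j) = k * v + (\<Sum>j\<in>{1..N}-{k}. j * a j)"
    using sum_upd[OF assms(2), of "\<lambda>j x. j * x"] by simp
  moreover have "m = k * a k + (\<Sum>j\<in>{1..N}-{k}. j * a j)"
    using assms sum.remove[of "{1..N}" k "\<lambda>j. j * a j"] by (simp add: good_def)
  ultimately show ?thesis using assms by (auto simp: good_def)
qed

lemma tuples_finite: "finite (tuples n)"
proof -
  have "tuples n \<subseteq> {a. \<forall>x. (x \<in> {1..n} \<longrightarrow> a x \<in> {0..n}) \<and> (x \<notin> {1..n} \<longrightarrow> a x = 0)}"
  proof
    fix a assume a: "a \<in> tuples n"
    then have g: "good n n a" by (simp add: tuples_good)
    have "a k \<le> n" for k
    proof (cases "k \<in> {1..n}")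
      case True
      have "a k \<le> k * a k" using True by auto
      also have "\<dots> \<le> (\<Sum>k=1..n. k * a k)"
        by (rule member_le_sum) (use True in auto)
      finally show ?thesis using a by (simp add: tuples_def)
    next
      case False then show ?thesis using a by (simp add: tuples_def)
    qed
    then show "a \<in> {a. \<forall>x. (x \<in> {1..n} \<longrightarrow> a x \<in> {0..n}) \<and> (x \<notin> {1..n} \<longrightarrow> a x = 0)}"
      using a by (auto simp: tuples_def)
  qed
  moreover have "finite {a. \<forall>x. (x \<in> {1..n} \<longrightarrow> a x \<in> {0..n}) \<and> (x \<notin> {1..n} \<longrightarrow> (a x::nat) = 0)}"
    by (rule finite_set_of_finite_funs) auto
  ultimately show ?thesis by (rule finite_subset)
qed

lemma reindex_core:
  fixes F :: "(nat \<Rightarrow> nat) \<Rightarrow> HR"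
  assumes k: "1 \<le> k" "k \<le> n"
  shows "(\<Sum>a\<in>tuples n. of_nat (a k) * F a)
       = (\<Sum>b\<in>tuples (n-k). of_nat (b k + 1) * F (b(k := b k + 1)))"
proof -
  have "(\<Sum>a\<in>tuples n. of_nat (a k) * F a) = (\<Sum>a\<in>{a\<in>tuples n. a k \<noteq> 0}. of_nat (a k) * F a)"
    by (rule sum.mono_neutral_right) (auto simp: tuples_finite)
  also have "\<dots> = (\<Sum>b\<in>tuples (n-k). of_nat (b k + 1) * F (b(k := b k + 1)))"
  proof (rule sum.reindex_bij_witness[where i = "\<lambda>b. b(k := b k + 1)" and j = "\<lambda>a. a(k := a k - 1)"])
    fix a assume a: "a \<in> {a \<in> tuples n. a k \<noteq> 0}"
    show "(a(k := a k - 1))(k := (a(k := a k - 1)) k + 1) = a" using a by auto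
  next
    fix a assume a: "a \<in> {a \<in> tuples n. a k \<noteq> 0}"
    have g: "good n n a" using a by (simp add: tuples_good)
    have "good n (n - k * a k + k * (a k - 1)) (a(k := a k - 1))"
      by (rule good_upd[OF g]) (use k in auto)
    moreover have "n - k * a k + k * (a k - 1) = n - k"
    proof -
      have "k * a k \<le> n"
      proof -
        have "k * a k \<le> (\<Sum>j=1..n. j * a j)" by (rule member_le_sum) (use k in auto)
        then show ?thesis using g by (simp add: good_def)
      qed
      moreover have "k * a k = k * (a k - 1) + k" using a by (cases "a k") auto
      ultimately show ?thesis by simp
    qed
    ultimately have "good n (n-k) (a(k := a k - 1))" by simp
    then show "a(k := a k - 1) \<in> tuples (n-k)" by (rule good_shrink) simp
  next
    fix b assume b: "b \<in> tuples (n-k)"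
    show "b(k := b k + 1, k := (b(k := b k + 1)) k - 1) = b" by simp
  next
    fix b assume b: "b \<in> tuples (n-k)"
    have g: "good n (n-k) b" using good_ext[OF b] by simp
    have "good n (n - k - k * b k + k * (b k + 1)) (b(k := b k + 1))"
      by (rule good_upd[OF g]) (use k in auto)
    moreover have "n - k - k * b k + k * (b k + 1) = n"
    proof -
      have "k * b k \<le> n - k"
      proof (cases "b k = 0")
        case False
        have "k * b k \<le> (\<Sum>j=1..n. j * b j)" by (rule member_le_sum) (use k in auto)
        then show ?thesis using g by (simp add: good_def)
      qed simp
      then show ?thesis using k by (simp add: algebra_simps)
    qed
    ultimately have "good n n (b(k := b k + 1))" by simp
    then show "b(k := b k + 1) \<in> {a \<in> tuples n. a k \<noteq> 0}" by (simp add: tuples_good)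
  next
    fix a assume a: "a \<in> {a \<in> tuples n. a k \<noteq> 0}"
    then have "a k - 1 + 1 = a k" by simp
    moreover have "(a(k := a k - 1))(k := a k - 1 + 1) = a" using a by auto
    ultimately show "of_nat ((a(k := a k - 1)) k + 1) * F ((a(k := a k - 1))(k := (a(k := a k - 1)) k + 1)) = of_nat (a k) * F a"
      by simp
  qed
  finally show ?thesis .
qed

definition U :: "(nat \<Rightarrow> HR) \<Rightarrow> nat \<Rightarrow> (nat \<Rightarrow> nat) \<Rightarrow> HR" where
  "U X n a = const (1 / of_nat (\<Prod>k=1..n. fact (a k))) * (\<Prod>k=1..n. X k ^ a k)"

lemma Psi_U: "Psi n X = (\<Sum>a\<in>tuples n. U X n a)"
  by (simp add: Psi_def U_def)

lemma zero_outside: "a \<in> tuples m \<Longrightarrow> k \<notin> {1..m} \<Longrightarrow> a k = 0"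
  by (simp add: tuples_def)

lemma U_ext: assumes "a \<in> tuples m" "m \<le> N" shows "U X N a = U X m a"
proof -
  have "(\<Prod>k=1..m. fact (a k) :: nat) = (\<Prod>k=1..N. fact (a k))"
    by (rule prod.mono_neutral_left) (use assms zero_outside[OF assms(1)] in auto)
  moreover have "(\<Prod>k=1..m. X k ^ a k) = (\<Prod>k=1..N. X k ^ a k)"
    by (rule prod.mono_neutral_left) (use assms zero_outside[OF assms(1)] in auto)
  ultimately show ?thesis unfolding U_def by (simp only:)
qed

lemma wsum_ext: assumes "a \<in> tuples m" "m \<le> N" shows "wsum N a = wsum m a"
proof -
  have "(\<Sum>k=1..m. a k) = (\<Sum>k=1..N. a k)"
    by (rule sum.mono_neutral_left) (use assms zero_outside[OF assms(1)] in auto)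
  then show ?thesis by (simp add: wsum_def)
qed

lemma U_shift:
  assumes b: "b \<in> tuples (n-k)" and k: "1 \<le> k" "k \<le> n"
  shows "of_nat (b k + 1) * U X n (b(k := b k + 1)) = X k * U X (n-k) b"
proof -
  have kin: "k \<in> {1..n}" using k by auto
  define F where "F = (\<Prod>j\<in>{1..n}-{k}. fact (b j) :: nat)"
  define Q where "Q = (\<Prod>j\<in>{1..n}-{k}. X j ^ b j)"
  have F0: "F \<noteq> 0" unfolding F_def by (simp add: prod_zero_iff)
  have f1: "(\<Prod>j=1..n. fact ((b(k := b k + 1)) j)) = fact (b k + 1) * F"
    unfolding F_def by (rule prod_upd[where f="\<lambda>j x. fact x", OF kin]) simp
  have f2: "(\<Prod>j=1..n. fact (b j)) = fact (b k) * F"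
    unfolding F_def using prod.remove[of "{1..n}" k "\<lambda>j. fact (b j)"] kin by simp
  have q1: "(\<Prod>j=1..n. X j ^ (b(k := b k + 1)) j) = X k ^ (b k + 1) * Q"
    unfolding Q_def by (rule prod_upd[where f="\<lambda>j x. X j ^ x", OF kin]) simp
  have q2: "(\<Prod>j=1..n. X j ^ b j) = X k ^ b k * Q"
    unfolding Q_def using prod.remove[of "{1..n}" k "\<lambda>j. X j ^ b j"] kin by simp
  have key: "of_nat (b k + 1) * const (1 / of_nat (fact (b k + 1) * F)) = const (1 / of_nat (fact (b k) * F))"
  proof -
    have e: "fact (b k + 1) * F = (b k + 1) * (fact (b k) * F)" by (simp add: algebra_simps)
    have nz: "fact (b k) * F \<noteq> 0" using F0 by simp
    have "(of_nat (b k + 1) :: rat) * (1 / of_nat ((b k + 1) * (fact (b k) * F))) = 1 / of_nat (fact (b k) * F)"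
    proof -
      have gen: "c * (1 / (c * y)) = 1 / y" if "c \<noteq> 0" for c y :: rat
      proof -
        have "c * (1 / (c * y)) = c / (c * y)" by (simp only: times_divide_eq_right mult_1_right)
        also have "\<dots> = 1 / y" using that by (rule nonzero_divide_mult_cancel_left)
        finally show ?thesis .
      qed
      have "(of_nat (b k + 1) :: rat) * (1 / (of_nat (b k + 1) * of_nat (fact (b k) * F))) = 1 / of_nat (fact (b k) * F)"
        by (rule gen) simp
      then show ?thesis by (simp only: of_nat_mult)
    qed
    then have "(of_nat (b k + 1) :: rat) * (1 / of_nat (fact (b k + 1) * F)) = 1 / of_nat (fact (b k) * F)"
      by (simp only: e)
    then have "const (of_nat (b k + 1) * (1 / of_nat (fact (b k + 1) * F))) = const (1 / of_nat (fact (b k) * F))"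
      by (rule arg_cong[where f=const])
    then have h: "const (of_nat (b k + 1) * (1 / of_nat (fact (b k + 1) * F))) = const (1 / of_nat (fact (b k) * F))" .
    have "of_nat (b k + 1) * const (1 / of_nat (fact (b k + 1) * F))
        = const (of_nat (b k + 1)) * const (1 / of_nat (fact (b k + 1) * F))"
      by (simp only: const_of_nat)
    also have "\<dots> = const (of_nat (b k + 1) * (1 / of_nat (fact (b k + 1) * F)))"
      by (rule const_mult[symmetric])
    finally show ?thesis using h by (rule trans)
  qed
  have "U X (n-k) b = U X n b" by (rule U_ext[OF b, symmetric]) simp
  also have "\<dots> = const (1 / of_nat (fact (b k) * F)) * (X k ^ b k * Q)"
    by (simp only: U_def f2 q2)
  finally have r: "U X (n-k) b = const (1 / of_nat (fact (b k) * F)) * (X k ^ b k * Q)" .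
  have "of_nat (b k + 1) * U X n (b(k := b k + 1))
     = (of_nat (b k + 1) * const (1 / of_nat (fact (b k + 1) * F))) * (X k ^ (b k + 1) * Q)"
    by (simp only: U_def f1 q1 mult.assoc)
  also have "\<dots> = const (1 / of_nat (fact (b k) * F)) * (X k ^ (b k + 1) * Q)"
    by (simp only: key)
  also have "\<dots> = X k * U X (n-k) b"
    by (simp only: r power_add power_one_right mult_ac)
  finally show ?thesis .
qed

lemma wsum_upd:
  assumes b: "b \<in> tuples (n-k)" and k: "1 \<le> k" "k \<le> n"
  shows "wsum n (b(k := b k + 1)) = wsum (n-k) b + 1"
proof -
  have kin: "k \<in> {1..n}" using k by auto
  have "wsum n (b(k := b k + 1)) = (b k + 1) + (\<Sum>j\<in>{1..n}-{k}. b j)"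
    unfolding wsum_def by (rule sum_upd[where f="\<lambda>j x. x", OF kin]) simp
  moreover have "wsum (n-k) b = b k + (\<Sum>j\<in>{1..n}-{k}. b j)"
    using wsum_ext[OF b, of n] sum.remove[of "{1..n}" k b] kin by (simp only: wsum_def) simp
  ultimately show ?thesis by simp
qed

lemma main_k:
  assumes k: "1 \<le> k" "k \<le> n"
  shows "(\<Sum>a\<in>tuples n. of_nat (a k) * (G (wsum n a) * U X n a))
       = X k * (\<Sum>b\<in>tuples (n-k). G (wsum (n-k) b + 1) * U X (n-k) b)"
proof -
  have "(\<Sum>a\<in>tuples n. of_nat (a k) * (G (wsum n a) * U X n a))
     = (\<Sum>b\<in>tuples (n-k). of_nat (b k + 1) * (G (wsum n (b(k := b k + 1))) * U X n (b(k := b k + 1))))"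
    by (rule reindex_core[OF k])
  also have "\<dots> = (\<Sum>b\<in>tuples (n-k). X k * (G (wsum (n-k) b + 1) * U X (n-k) b))"
  proof (rule sum.cong[OF refl])
    fix b assume b: "b \<in> tuples (n-k)"
    have "of_nat (b k + 1) * (G (wsum n (b(k := b k + 1))) * U X n (b(k := b k + 1)))
        = G (wsum (n-k) b + 1) * (of_nat (b k + 1) * U X n (b(k := b k + 1)))"
      by (subst wsum_upd[OF b k]) (rule mult.left_commute)
    also have "\<dots> = G (wsum (n-k) b + 1) * (X k * U X (n-k) b)"
      by (simp only: U_shift[OF b k])
    also have "\<dots> = X k * (G (wsum (n-k) b + 1) * U X (n-k) b)"
      by (rule mult.left_commute)
    finally show "of_nat (b k + 1) * (G (wsum n (b(k := b k + 1))) * U X n (b(k := b k + 1)))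
        = X k * (G (wsum (n-k) b + 1) * U X (n-k) b)" .
  qed
  also have "\<dots> = X k * (\<Sum>b\<in>tuples (n-k). G (wsum (n-k) b + 1) * U X (n-k) b)"
    by (simp add: sum_distrib_left)
  finally show ?thesis .
qed

lemma main_w:
  "of_nat n * (\<Sum>a\<in>tuples n. G (wsum n a) * U X n a)
   = (\<Sum>k=1..n. of_nat k * X k * (\<Sum>b\<in>tuples (n-k). G (wsum (n-k) b + 1) * U X (n-k) b))"
proof -
  have "of_nat n * (\<Sum>a\<in>tuples n. G (wsum n a) * U X n a)
      = (\<Sum>a\<in>tuples n. (\<Sum>k=1..n. of_nat k * (of_nat (a k) * (G (wsum n a) * U X n a))))"
  proof -
    have "of_nat n * (\<Sum>a\<in>tuples n. G (wsum n a) * U X n a)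
        = (\<Sum>a\<in>tuples n. of_nat n * (G (wsum n a) * U X n a))" by (simp add: sum_distrib_left)
    also have "\<dots> = (\<Sum>a\<in>tuples n. (\<Sum>k=1..n. of_nat k * (of_nat (a k) * (G (wsum n a) * U X n a))))"
    proof (rule sum.cong[OF refl])
      fix a assume a: "a \<in> tuples n"
      have "(of_nat n :: HR) = of_nat (\<Sum>k=1..n. k * a k)" using a by (simp add: tuples_def)
      also have "\<dots> = (\<Sum>k=1..n. of_nat k * of_nat (a k))" by simp
      finally show "of_nat n * (G (wsum n a) * U X n a) = (\<Sum>k=1..n. of_nat k * (of_nat (a k) * (G (wsum n a) * U X n a)))"
        by (simp add: sum_distrib_right mult.assoc)
    qed
    finally show ?thesis .
  qed
  also have "\<dots> = (\<Sum>k=1..n. of_nat k * (\<Sum>a\<in>tuples n. of_nat (a k) * (G (wsum n a) * U X n a)))"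
    by (subst sum.swap) (simp add: sum_distrib_left)
  also have "\<dots> = (\<Sum>k=1..n. of_nat k * X k * (\<Sum>b\<in>tuples (n-k). G (wsum (n-k) b + 1) * U X (n-k) b))"
    by (rule sum.cong[OF refl]) (simp add: main_k mult.assoc)
  finally show ?thesis .
qed

lemma main_u:
  "(\<Sum>a\<in>tuples n. of_nat (wsum n a) * (G (wsum n a) * U X n a))
   = (\<Sum>k=1..n. X k * (\<Sum>b\<in>tuples (n-k). G (wsum (n-k) b + 1) * U X (n-k) b))"
proof -
  have "(\<Sum>a\<in>tuples n. of_nat (wsum n a) * (G (wsum n a) * U X n a))
      = (\<Sum>a\<in>tuples n. (\<Sum>k=1..n. of_nat (a k) * (G (wsum n a) * U X n a)))"
    by (rule sum.cong[OF refl]) (simp add: wsum_def sum_distrib_right)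
  also have "\<dots> = (\<Sum>k=1..n. (\<Sum>a\<in>tuples n. of_nat (a k) * (G (wsum n a) * U X n a)))"
    by (rule sum.swap)
  also have "\<dots> = (\<Sum>k=1..n. X k * (\<Sum>b\<in>tuples (n-k). G (wsum (n-k) b + 1) * U X (n-k) b))"
    by (rule sum.cong[OF refl]) (simp add: main_k)
  finally show ?thesis .
qed

lemma Psi_rec: "of_nat n * Psi n X = (\<Sum>k=1..n. of_nat k * X k * Psi (n-k) X)"
  using main_w[of n "\<lambda>_. 1" X] by (simp add: Psi_U)

lemma tuples_0: "tuples 0 = {\<lambda>_. 0}"
  by (auto simp: tuples_def)

lemma Psi_0: "Psi 0 X = 1"
  by (simp add: Psi_def tuples_0)

lemma Psi_local:
  assumes "\<And>k. k \<in> {1..n} \<Longrightarrow> X k = Y k"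
  shows "Psi n X = Psi n Y"
proof -
  have "\<And>a. (\<Prod>k=1..n. X k ^ a k) = (\<Prod>k=1..n. Y k ^ a k)"
    by (rule prod.cong) (auto simp: assms)
  then show ?thesis by (simp add: Psi_def)
qed

definition R :: "(nat \<Rightarrow> HR) \<Rightarrow> nat \<Rightarrow> nat \<Rightarrow> HR" where
  "R X n m = (\<Sum>a\<in>tuples n. (if wsum n a = m then 1 else 0) * U X n a)"

lemma R_rec: "of_nat (m+1) * R X n (m+1) = (\<Sum>k=1..n. X k * R X (n-k) m)"
proof -
  have "of_nat (m+1) * R X n (m+1)
      = (\<Sum>a\<in>tuples n. of_nat (wsum n a) * ((\<lambda>j. if j = m+1 then 1 else 0) (wsum n a) * U X n a))"
    unfolding R_def sum_distrib_left by (rule sum.cong) auto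
  also have "\<dots> = (\<Sum>k=1..n. X k * (\<Sum>b\<in>tuples (n-k). (\<lambda>j. if j = m+1 then 1 else 0) (wsum (n-k) b + 1) * U X (n-k) b))"
    by (rule main_u)
  also have "\<dots> = (\<Sum>k=1..n. X k * R X (n-k) m)"
    unfolding R_def by simp
  finally show ?thesis .
qed

lemma wsum_le: assumes "a \<in> tuples n" shows "wsum n a \<le> n"
proof -
  have "wsum n a \<le> (\<Sum>k=1..n. k * a k)" unfolding wsum_def by (rule sum_mono) auto
  then show ?thesis using assms by (simp add: tuples_def)
qed

lemma wsum_pos: assumes "a \<in> tuples n" "n \<ge> 1" shows "wsum n a \<noteq> 0"
proof
  assume "wsum n a = 0"
  then have "\<forall>k\<in>{1..n}. a k = 0" by (simp add: wsum_def)
  then have "(\<Sum>k=1..n. k * a k) = 0" by simp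
  then show False using assms by (simp add: tuples_def)
qed

lemma R_big: assumes "n < m" shows "R X n m = 0"
  unfolding R_def using wsum_le assms by (intro sum.neutral) (auto dest!: wsum_le)

lemma R_0: "R X n 0 = (if n = 0 then 1 else 0)"
proof (cases "n = 0")
  case True
  then show ?thesis by (simp add: R_def tuples_0 wsum_def U_def)
next
  case False
  have "(if wsum n a = 0 then 1 else 0) * U X n a = 0" if "a \<in> tuples n" for a
    using wsum_pos[OF that] False by simp
  then have "\<forall>a\<in>tuples n. (if wsum n a = 0 then 1 else 0) * U X n a = 0" by blast
  then have "R X n 0 = 0" unfolding R_def by (rule sum.neutral)
  then show ?thesis using False by simp
qed

definition Lf :: "(nat \<Rightarrow> HR) \<Rightarrow> HR fps" where
  "Lf X = Abs_fps (\<lambda>n. if n = 0 then 0 else X n)"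

lemma Lf_nth: "fps_nth (Lf X) n = (if n = 0 then 0 else X n)"
  by (simp add: Lf_def)

lemma Lf_pow: "fps_nth (Lf X ^ m) n = of_nat (fact m) * R X n m"
proof (induction m arbitrary: n)
  case 0
  then show ?case by (simp add: R_0)
next
  case (Suc m)
  have "fps_nth (Lf X ^ Suc m) n = (\<Sum>i=0..n. fps_nth (Lf X) i * fps_nth (Lf X ^ m) (n - i))"
    by (simp add: fps_mult_nth)
  also have "\<dots> = fps_nth (Lf X) 0 * fps_nth (Lf X ^ m) (n - 0) + (\<Sum>i=Suc 0..n. fps_nth (Lf X) i * fps_nth (Lf X ^ m) (n - i))"
    by (rule sum.atLeast_Suc_atMost) simp
  also have "\<dots> = (\<Sum>i=1..n. X i * (of_nat (fact m) * R X (n - i) m))"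
    by (simp add: Lf_nth Suc.IH)
  also have "\<dots> = of_nat (fact m) * (\<Sum>i=1..n. X i * R X (n - i) m)"
    by (simp add: sum_distrib_left mult_ac)
  also have "\<dots> = of_nat (fact m) * (of_nat (m+1) * R X n (m+1))"
    by (simp only: R_rec)
  also have "\<dots> = of_nat (fact (Suc m)) * R X n (Suc m)"
    by (simp add: algebra_simps)
  finally show ?case .
qed

lemma Lf_neg: "Lf (\<lambda>k. - X k) = - Lf X"
  by (rule fps_ext) (simp add: Lf_nth)

lemma Lf_pow_small: assumes "j < N" shows "fps_nth ((- Lf X) ^ N) j = 0"
proof -
  have "fps_nth ((- Lf X) ^ N) j = fps_nth (Lf (\<lambda>k. - X k) ^ N) j" by (simp only: Lf_neg)
  also have "\<dots> = 0" by (simp only: Lf_pow R_big[OF assms] mult_zero_right)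
  finally show ?thesis .
qed

definition Qfps :: "(nat \<Rightarrow> HR) \<Rightarrow> nat \<Rightarrow> HR fps" where
  "Qfps X N = (\<Sum>m=1..N. fps_const (const ((-1)^(m+1) / of_nat m)) * Lf X ^ m)"

lemma const_pow: "const (a ^ j) = const a ^ j"
  by (induction j) (simp_all add: const_mult)

lemma const_neg1: "const (-1) = -1"
  by (simp add: const_def single_uminus)

lemma fps_const_m1_pow: "fps_const ((-1::HR) ^ j) = (-1) ^ j"
proof -
  have "fps_const ((-1::HR) ^ j) = fps_const (-1) ^ j" by (simp only: fps_const_power)
  also have "fps_const (-1::HR) = - 1" by (simp flip: fps_const_neg)
  finally show ?thesis .
qed

lemma term_deriv:
  assumes "m \<ge> 1"
  shows "fps_const (const ((-1)^(m+1) / of_nat m)) * fps_deriv (L ^ m) = fps_deriv L * (- L) ^ (m - 1)"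
proof -
  obtain j where m: "m = Suc j" using assms by (cases m) auto
  have c: "const ((-1)^(m+1) / of_nat m) * of_nat m = (-1::HR) ^ j"
  proof -
    have r: "(-1::rat)^(m+1) / of_nat m * of_nat m = (-1) ^ j" using m by simp
    have "const ((-1)^(m+1) / of_nat m) * (of_nat m :: HR) = const ((-1)^(m+1) / of_nat m) * const (of_nat m)"
      by (simp only: const_of_nat)
    also have "\<dots> = const ((-1)^(m+1) / of_nat m * of_nat m)" by (rule const_mult[symmetric])
    also have "\<dots> = const ((-1) ^ j)" by (simp only: r)
    also have "\<dots> = (-1) ^ j" by (simp only: const_pow const_neg1)
    finally show ?thesis .
  qed
  have "fps_const (const ((-1)^(m+1) / of_nat m)) * fps_deriv (L ^ m)
      = fps_const (const ((-1)^(m+1) / of_nat m)) * (fps_const (of_nat m) * fps_deriv L * L ^ (m - 1))"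
    by (simp only: fps_deriv_power)
  also have "\<dots> = fps_const (const ((-1)^(m+1) / of_nat m) * of_nat m) * fps_deriv L * L ^ (m - 1)"
    by (simp only: fps_const_mult[symmetric] mult.assoc)
  also have "\<dots> = (-1) ^ j * fps_deriv L * L ^ j"
    by (simp only: c fps_const_m1_pow) (simp only: m diff_Suc_1)
  also have "\<dots> = fps_deriv L * (- L) ^ (m - 1)"
  proof -
    have pm: "(- L) ^ j = (-1) ^ j * L ^ j" by (rule power_minus)
    show ?thesis by (simp only: m diff_Suc_1 pm mult_ac)
  qed
  finally show ?thesis .
qed

lemma fps_ident:
  "fps_deriv (Qfps X N) * (1 + Lf X) = fps_deriv (Lf X) * (1 - (- Lf X) ^ N)"
proof -
  have "fps_deriv (Qfps X N) = (\<Sum>m=1..N. fps_const (const ((-1)^(m+1) / of_nat m)) * fps_deriv (Lf X ^ m))"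
    by (simp add: Qfps_def fps_deriv_sum)
  also have "\<dots> = (\<Sum>m=1..N. fps_deriv (Lf X) * (- Lf X) ^ (m - 1))"
    by (rule sum.cong[OF refl]) (rule term_deriv, simp)
  also have "\<dots> = (\<Sum>i<N. fps_deriv (Lf X) * (- Lf X) ^ i)"
    by (simp only: One_nat_def sum.atLeast1_atMost_eq diff_Suc_Suc diff_zero)
  also have "\<dots> = fps_deriv (Lf X) * (\<Sum>i<N. (- Lf X) ^ i)"
    by (simp only: sum_distrib_left)
  finally have d: "fps_deriv (Qfps X N) = fps_deriv (Lf X) * (\<Sum>i<N. (- Lf X) ^ i)" .
  have "1 - (- Lf X) ^ N = (1 - (- Lf X)) * (\<Sum>i<N. (- Lf X) ^ i)"
    by (rule one_diff_power_eq)
  then have "(\<Sum>i<N. (- Lf X) ^ i) * (1 + Lf X) = 1 - (- Lf X) ^ N"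
    by (simp add: mult.commute)
  then show ?thesis using d by (simp only: mult.assoc)
qed

definition lp :: "(nat \<Rightarrow> HR) \<Rightarrow> nat \<Rightarrow> HR" where
  "lp X j = (if j = 0 then 1 else X j)"

lemma lp_eq: "fps_nth (1 + Lf X) j = lp X j"
  by (simp add: lp_def Lf_nth)

lemma RecQfps:
  assumes n: "1 \<le> n" "n \<le> N"
  shows "of_nat n * X n = (\<Sum>k=1..n. of_nat k * fps_nth (Qfps X N) k * lp X (n - k))"
proof -
  have "fps_nth (fps_deriv (Qfps X N) * (1 + Lf X)) (n - 1)
      = (\<Sum>i=0..n-1. of_nat (i + 1) * fps_nth (Qfps X N) (i + 1) * lp X (n - 1 - i))"
    by (simp only: fps_mult_nth fps_deriv_nth lp_eq)
  also have "\<dots> = (\<Sum>k=Suc 0..Suc (n-1). of_nat k * fps_nth (Qfps X N) k * lp X (n - k))"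
    by (simp only: sum.atLeast_Suc_atMost_Suc_shift o_def) simp
  also have "\<dots> = (\<Sum>k=1..n. of_nat k * fps_nth (Qfps X N) k * lp X (n - k))"
    using n by simp
  finally have l: "fps_nth (fps_deriv (Qfps X N) * (1 + Lf X)) (n - 1) = (\<Sum>k=1..n. of_nat k * fps_nth (Qfps X N) k * lp X (n - k))" .
  have z: "fps_nth (fps_deriv (Lf X) * (- Lf X) ^ N) (n - 1) = 0"
    unfolding fps_mult_nth by (rule sum.neutral) (use n Lf_pow_small in auto)
  have "fps_nth (fps_deriv (Lf X) * (1 - (- Lf X) ^ N)) (n - 1) = fps_nth (fps_deriv (Lf X)) (n - 1) - fps_nth (fps_deriv (Lf X) * (- Lf X) ^ N) (n - 1)"
    by (simp only: right_diff_distrib mult_1_right fps_sub_nth)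
  also have "\<dots> = of_nat n * X n" using n by (simp only: z) (simp add: Lf_nth)
  finally have r: "fps_nth (fps_deriv (Lf X) * (1 - (- Lf X) ^ N)) (n - 1) = of_nat n * X n" .
  have e: "fps_nth (fps_deriv (Qfps X N) * (1 + Lf X)) (n - 1) = fps_nth (fps_deriv (Lf X) * (1 - (- Lf X) ^ N)) (n - 1)"
    by (simp only: fps_ident)
  show ?thesis using e unfolding l r by (rule sym)
qed

definition Qt :: "(nat \<Rightarrow> HR) \<Rightarrow> nat \<Rightarrow> HR" where
  "Qt X i = (\<Sum>a\<in>tuples i.
     const ((-1) ^ ((\<Sum>k=1..i. a k) + 1) * of_nat (fact ((\<Sum>k=1..i. a k) - 1))
            / of_nat (\<Prod>k=1..i. fact (a k)))
     * (\<Prod>k=1..i. X k ^ a k))"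

lemma coef_term:
  assumes "w \<ge> 1"
  shows "const ((-1)^(w+1) / of_nat w) * of_nat (fact w) * (const (1 / of_nat Pn) * Pr)
       = const ((-1) ^ (w + 1) * of_nat (fact (w - 1)) / of_nat Pn) * Pr"
proof -
  obtain v where w: "w = Suc v" using assms by (cases w) auto
  have r: "(-1::rat)^(w+1) / of_nat w * of_nat (fact w) * (1 / of_nat Pn) = (-1) ^ (w + 1) * of_nat (fact (w - 1)) / of_nat Pn"
  proof -
    have fw: "(of_nat (fact w) :: rat) = of_nat w * of_nat (fact (w-1))" by (simp add: w algebra_simps)
    have wnz: "(of_nat w :: rat) \<noteq> 0" using assms by simp
    show ?thesis
    proof (cases "Pn = 0")
      case True then show ?thesis by simp
    next
      case False
      then show ?thesis unfolding fw using wnz by (simp add: field_simps)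
    qed
  qed
  have "const ((-1)^(w+1) / of_nat w) * of_nat (fact w) * (const (1 / of_nat Pn) * Pr)
      = (const ((-1)^(w+1) / of_nat w) * const (of_nat (fact w)) * const (1 / of_nat Pn)) * Pr"
    by (simp only: const_of_nat mult.assoc)
  also have "\<dots> = const ((-1)^(w+1) / of_nat w * of_nat (fact w) * (1 / of_nat Pn)) * Pr"
    by (simp only: const_mult)
  also have "\<dots> = const ((-1) ^ (w + 1) * of_nat (fact (w - 1)) / of_nat Pn) * Pr"
    by (simp only: r)
  finally show ?thesis .
qed

lemma Qcoef:
  assumes k: "1 \<le> k" "k \<le> N"
  shows "fps_nth (Qfps X N) k = Qt X k"
proof -
  let ?c = "\<lambda>m. const ((-1)^(m+1) / of_nat m)"
  have "fps_nth (Qfps X N) k = (\<Sum>m=1..N. ?c m * (of_nat (fact m) * R X k m))"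
    by (simp add: Qfps_def fps_sum_nth Lf_pow)
  also have "\<dots> = (\<Sum>m=1..N. \<Sum>a\<in>tuples k. (if wsum k a = m then ?c m * of_nat (fact m) * U X k a else 0))"
  proof (rule sum.cong[OF refl])
    fix m
    have pt: "?c m * (of_nat (fact m) * ((if wsum k a = m then 1 else 0) * U X k a))
        = (if wsum k a = m then ?c m * of_nat (fact m) * U X k a else 0)" for a
      by (cases "wsum k a = m") (simp_all only: simp_thms if_True if_False mult_1_left mult_zero_left mult_zero_right mult.assoc)
    show "?c m * (of_nat (fact m) * R X k m) = (\<Sum>a\<in>tuples k. (if wsum k a = m then ?c m * of_nat (fact m) * U X k a else 0))"
      unfolding R_def sum_distrib_left pt ..
  qed
  also have "\<dots> = (\<Sum>a\<in>tuples k. \<Sum>m=1..N. (if wsum k a = m then ?c m * of_nat (fact m) * U X k a else 0))"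
    by (rule sum.swap)
  also have "\<dots> = (\<Sum>a\<in>tuples k. ?c (wsum k a) * of_nat (fact (wsum k a)) * U X k a)"
  proof (rule sum.cong[OF refl])
    fix a assume a: "a \<in> tuples k"
    have "wsum k a \<in> {1..N}" using wsum_pos[OF a] wsum_le[OF a] k by auto
    then show "(\<Sum>m=1..N. (if wsum k a = m then ?c m * of_nat (fact m) * U X k a else 0))
        = ?c (wsum k a) * of_nat (fact (wsum k a)) * U X k a"
      by (simp add: sum.delta)
  qed
  also have "\<dots> = Qt X k"
    unfolding Qt_def
  proof (rule sum.cong[OF refl])
    fix a assume a: "a \<in> tuples k"
    have "wsum k a \<ge> 1" using wsum_pos[OF a] k by auto
    then show "?c (wsum k a) * of_nat (fact (wsum k a)) * U X k a
       = const ((-1) ^ ((\<Sum>j=1..k. a j) + 1) * of_nat (fact ((\<Sum>j=1..k. a j) - 1))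
            / of_nat (\<Prod>j=1..k. fact (a j))) * (\<Prod>j=1..k. X j ^ a j)"
      unfolding U_def using coef_term by (simp only: wsum_def)
  qed
  finally show ?thesis .
qed

lemma RecQ:
  assumes n: "1 \<le> n"
  shows "of_nat n * X n = (\<Sum>k=1..n. of_nat k * Qt X k * lp X (n - k))"
proof -
  have "of_nat n * X n = (\<Sum>k=1..n. of_nat k * fps_nth (Qfps X n) k * lp X (n - k))"
    by (rule RecQfps) (use n in auto)
  also have "\<dots> = (\<Sum>k=1..n. of_nat k * Qt X k * lp X (n - k))"
    by (rule sum.cong[OF refl]) (simp add: Qcoef)
  finally show ?thesis .
qed

lemma Pfun_eq: "Pfun m k = (if 1 \<le> k \<and> k \<le> m then P k else 0)"
proof (induction m arbitrary: k)
  case 0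
  then show ?case by auto
next
  case (Suc m)
  show ?case
  proof (cases "k = Suc m")
    case True
    then show ?thesis by (simp add: P_def)
  next
    case False
    then have "Pfun (Suc m) k = Pfun m k" by simp
    then show ?thesis using Suc.IH False by auto
  qed
qed

lemma Psi1_zero: "Psi 1 (\<lambda>_. 0) = 0"
  using Psi_rec[of 1 "\<lambda>_. 0"] by simp

lemma P_rec: assumes "n \<ge> 1" shows "P n = ladder n - Psi n (Pfun (n - 1))"
proof -
  obtain m where m: "n = Suc m" using assms by (cases n) auto
  show ?thesis
  proof (cases "m = 0")
    case True
    then show ?thesis using m Psi1_zero by (simp add: P_def)
  next
    case False
    then show ?thesis using m by (simp add: P_def)
  qed
qed

lemma Psi_P: assumes n: "n \<ge> 1" shows "Psi n (\<lambda>k. P k) = ladder n"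
proof -
  let ?Y = "\<lambda>k. P k" and ?X = "Pfun (n - 1)"
  obtain m where m: "n = Suc m" using n by (cases n) auto
  have loc: "Psi (n - k) ?Y = Psi (n - k) ?X" if "k \<in> {1..n}" for k
    by (rule Psi_local) (use that in \<open>auto simp: Pfun_eq\<close>)
  have eqk: "of_nat k * ?Y k * Psi (n - k) ?Y = of_nat k * ?X k * Psi (n - k) ?X" if "k \<in> {1..m}" for k
    using that loc[of k] m by (auto simp: Pfun_eq)
  have Xn: "?X n = 0" using m by (simp add: Pfun_eq)
  have "of_nat n * Psi n ?Y = (\<Sum>k=1..n. of_nat k * ?Y k * Psi (n - k) ?Y)" by (rule Psi_rec)
  also have "\<dots> = (\<Sum>k=1..m. of_nat k * ?Y k * Psi (n - k) ?Y) + of_nat n * P n"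
    using m by (simp add: Psi_0)
  also have "\<dots> = (\<Sum>k=1..m. of_nat k * ?X k * Psi (n - k) ?X) + of_nat n * P n"
    using eqk by simp
  also have "(\<Sum>k=1..m. of_nat k * ?X k * Psi (n - k) ?X) = (\<Sum>k=1..n. of_nat k * ?X k * Psi (n - k) ?X)"
    using m Xn by simp
  also have "\<dots> = of_nat n * Psi n ?X" by (rule Psi_rec[symmetric])
  finally have "of_nat n * Psi n ?Y = of_nat n * (Psi n ?X + P n)" by (simp add: algebra_simps)
  then have "Psi n ?Y = Psi n ?X + P n" by (rule cancel_nat) (use n in simp)
  then show ?thesis using P_rec[OF n] by simp
qed

lemma RecP:
  assumes n: "1 \<le> n"
  shows "of_nat n * ladder n = (\<Sum>k=1..n. of_nat k * P k * lp ladder (n - k))"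
proof -
  have "of_nat n * ladder n = of_nat n * Psi n (\<lambda>k. P k)" using Psi_P[OF n] by simp
  also have "\<dots> = (\<Sum>k=1..n. of_nat k * P k * Psi (n - k) (\<lambda>k. P k))" by (rule Psi_rec)
  also have "\<dots> = (\<Sum>k=1..n. of_nat k * P k * lp ladder (n - k))"
    by (rule sum.cong[OF refl]) (auto simp: lp_def Psi_0 Psi_P)
  finally show ?thesis .
qed

lemma P_eq_Qt: "n \<ge> 1 \<Longrightarrow> P n = Qt ladder n"
proof (induction n rule: less_induct)
  case (less n)
  obtain m where m: "n = Suc m" using less.prems by (cases n) auto
  have ih: "of_nat k * P k * lp ladder (n - k) = of_nat k * Qt ladder k * lp ladder (n - k)" if "k \<in> {1..m}" for k
    using that less.IH[of k] m by auto
  have "(\<Sum>k=1..m. of_nat k * P k * lp ladder (n - k)) + of_nat n * P n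
      = (\<Sum>k=1..n. of_nat k * P k * lp ladder (n - k))"
    using m by (simp add: lp_def)
  also have "\<dots> = of_nat n * ladder n" by (rule RecP[OF less.prems, symmetric])
  also have "\<dots> = (\<Sum>k=1..n. of_nat k * Qt ladder k * lp ladder (n - k))" by (rule RecQ[OF less.prems])
  also have "\<dots> = (\<Sum>k=1..m. of_nat k * Qt ladder k * lp ladder (n - k)) + of_nat n * Qt ladder n"
    using m by (simp add: lp_def)
  also have "(\<Sum>k=1..m. of_nat k * Qt ladder k * lp ladder (n - k)) = (\<Sum>k=1..m. of_nat k * P k * lp ladder (n - k))"
    using ih by simp
  finally have "of_nat n * P n = of_nat n * Qt ladder n" by simp
  then show ?case by (rule cancel_nat) (use m in simp)
qed

theorem proposition9p3:
  fixes i :: nat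
  assumes "i \<ge> 1"
  shows "P i = (\<Sum>a\<in>tuples i.
     const ((-1) ^ ((\<Sum>k=1..i. a k) + 1) * of_nat (fact ((\<Sum>k=1..i. a k) - 1))
            / of_nat (\<Prod>k=1..i. fact (a k)))
     * (\<Prod>k=1..i. ladder k ^ a k))"
  using P_eq_Qt[OF assms] by (simp only: Qt_def)

end
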